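(* Assume $\mu_n\to0$ and $n^{1/2}\mu_n\to\mathfrak m$ with $0\le\mathfrak m<\infty$, and suppose $\theta_n\in\mathbb R$ satisfies $n^{1/2}\theta_n\to\nu\in\mathbb R\cup\{-\infty,\infty\}$. If $\nu\in\mathbb R$, then $F_{A,n,\theta_n}$ converges weakly to the distribution with cdf $$x\mapsto \mathbf 1(x+\nu\ge0)\,\Phi\Big(-\frac{\nu-x}{2}+\sqrt{\big(\tfrac{\nu+x}{2}\big)^2+\mathfrak m^2}\Big)+\mathbf 1(x+\nu<0)\,\Phi\Big(-\frac{\nu-x}{2}-\sqrt{\big(\tfrac{\nu+x}{2}\big)^2+\mathfrak m^2}\Big).$$ If $|\nu|=\infty$, then $F_{A,n,\theta_n}$ converges weakly to $\Phi$ (the standard normal distribution).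
   Context: Gaussian location model: for each sample size $n$, $y_1,\dots,y_n$ are i.i.d. $N(\theta,1)$ with $\theta\in\mathbb R$ unknown; $\bar y$ is their mean. $P_{n,\theta}$ denotes the probability governing a sample of size $n$ when $\theta$ is the true parameter. Given a nonrandom tuning parameter $\mu_n>0$, the adaptive LASSO estimator is $\hat\theta_A=0$ if $|\bar y|\le\mu_n$ and $\hat\theta_A=\bar y-\mu_n^2/\bar y$ if $|\bar y|>\mu_n$. $F_{A,n,\theta}$ denotes the cdf of $n^{1/2}(\hat\theta_A-\theta)$ under $P_{n,\theta}$. $\Phi$ is the standard normal cdf. *)

theory Defs
  imports "HOL-Probability.Probability"
begin

definition Phi :: "real \<Rightarrow> real" where
  "Phi x = cdf (density lborel std_normal_density) x"

definition sample_law :: "nat \<Rightarrow> real \<Rightarrow> (nat \<Rightarrow> real) measure" where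
  "sample_law n \<theta> = PiM {..<n} (\<lambda>_. density lborel (normal_density \<theta> 1))"

definition ybar :: "nat \<Rightarrow> (nat \<Rightarrow> real) \<Rightarrow> real" where
  "ybar n y = (\<Sum>i<n. y i) / real n"

definition alasso :: "real \<Rightarrow> real \<Rightarrow> real" where
  "alasso \<mu> yb = (if \<bar>yb\<bar> \<le> \<mu> then 0 else yb - \<mu>\<^sup>2 / yb)"

definition F_A :: "nat \<Rightarrow> real \<Rightarrow> real \<Rightarrow> real \<Rightarrow> real" where
  "F_A n \<mu> \<theta> x = cdf (distr (sample_law n \<theta>) borel
       (\<lambda>y. sqrt (real n) * (alasso \<mu> (ybar n y) - \<theta>))) x"

definition G_lim :: "real \<Rightarrow> real \<Rightarrow> real \<Rightarrow> real" where
  "G_lim m \<nu> x =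
     (if x + \<nu> \<ge> 0
      then Phi (- (\<nu> - x) / 2 + sqrt (((\<nu> + x) / 2)\<^sup>2 + m\<^sup>2))
      else Phi (- (\<nu> - x) / 2 - sqrt (((\<nu> + x) / 2)\<^sup>2 + m\<^sup>2)))"

end

theory Submission
  imports Defs
begin
definition kk :: "real \<Rightarrow> real \<Rightarrow> real" where
  "kk a t = (if t \<ge> 0 then t/2 + sqrt((t/2)^2 + a^2) else t/2 - sqrt((t/2)^2 + a^2))"

lemma kk_basic:
  fixes a t :: real
  assumes "a \<ge> 0"
  defines "s \<equiv> sqrt((t/2)^2 + a^2)"
  shows "s^2 = (t/2)^2 + a^2" "s \<ge> \<bar>t/2\<bar>" "s \<ge> a" "s \<ge> 0"
proof -
  show s2: "s^2 = (t/2)^2 + a^2" unfolding s_def by (simp add: add_nonneg_nonneg)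
  show "s \<ge> \<bar>t/2\<bar>" unfolding s_def by (rule real_le_rsqrt) (simp add: power_divide)
  show "s \<ge> a" unfolding s_def by (rule real_le_rsqrt) simp
  show "s \<ge> 0" unfolding s_def by simp
qed

lemma alasso_le_iff:
  fixes a u t :: real
  assumes a: "a \<ge> 0"
  shows "alasso a u \<le> t \<longleftrightarrow> u \<le> kk a t"
proof -
  define s where "s = sqrt((t/2)^2 + a^2)"
  note b = kk_basic[OF a, of t, folded s_def]
  have prod: "(u - (t/2 - s)) * (u - (t/2 + s)) = u^2 - t*u - a^2"
    using b(1) by (simp add: algebra_simps power2_eq_square)
  show ?thesis
  proof (cases "t \<ge> 0")
    case True
    then have k: "kk a t = t/2 + s" by (simp add: kk_def s_def)
    show ?thesis
    proof (cases "\<bar>u\<bar> \<le> a")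
      case True then show ?thesis using k b \<open>t\<ge>0\<close> by (simp add: alasso_def)
    next
      case False
      show ?thesis
      proof (cases "u > 0")
        case True
        have "alasso a u \<le> t \<longleftrightarrow> u - a^2/u \<le> t" using False by (simp add: alasso_def)
        also have "\<dots> \<longleftrightarrow> u^2 - t*u - a^2 \<le> 0" using True
          by (simp add: field_simps power2_eq_square)
        also have "\<dots> \<longleftrightarrow> u \<le> t/2 + s"
        proof
          assume "u^2 - t*u - a^2 \<le> 0"
          then have "(u - (t/2 - s)) * (u - (t/2 + s)) \<le> 0" using prod by simp
          moreover have "u - (t/2 - s) > 0" using b \<open>t\<ge>0\<close> True by linarith
          ultimately show "u \<le> t/2 + s" by (simp add: mult_le_0_iff)
        next
          assume "u \<le> t/2 + s"
          moreover have "u - (t/2 - s) > 0" using b \<open>t\<ge>0\<close> True by linarith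
          ultimately have "(u - (t/2 - s)) * (u - (t/2 + s)) \<le> 0" by (simp add: mult_le_0_iff)
          then show "u^2 - t*u - a^2 \<le> 0" using prod by simp
        qed
        finally show ?thesis using k by simp
      next
        case neg: False
        then have u: "u < -a" using False by linarith
        have "a^2 \<le> u^2" using power_mono[of a "-u" 2] u a by simp
        then have "u \<le> a^2/u" using u a
          by (simp add: field_simps power2_eq_square)
        then have "alasso a u \<le> t" using False \<open>t\<ge>0\<close> by (simp add: alasso_def)
        moreover have "u \<le> kk a t" using k b u a \<open>t\<ge>0\<close> by linarith
        ultimately show ?thesis by simp
      qed
    qed
  next
    case tneg: False
    then have k: "kk a t = t/2 - s" by (simp add: kk_def s_def)
    show ?thesis
    proof (cases "\<bar>u\<bar> \<le> a")
      case True then show ?thesis using k b tneg by (simp add: alasso_def)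
    next
      case False
      show ?thesis
      proof (cases "u > 0")
        case True
        then have u: "u > a" using False by linarith
        have "a^2 < u^2" using power_strict_mono[of a u 2] u a by simp
        then have "a^2/u < u" using u a
          by (simp add: field_simps power2_eq_square)
        then have "\<not> alasso a u \<le> t" using False tneg by (simp add: alasso_def)
        moreover have "\<not> u \<le> kk a t" using k b u a tneg by linarith
        ultimately show ?thesis by simp
      next
        case neg: False
        then have u: "u < 0" using False a by linarith
        have "alasso a u \<le> t \<longleftrightarrow> u - a^2/u \<le> t" using False by (simp add: alasso_def)
        also have "\<dots> \<longleftrightarrow> u^2 - t*u - a^2 \<ge> 0" using u
          by (simp add: field_simps power2_eq_square)
        also have "\<dots> \<longleftrightarrow> u \<le> t/2 - s"
        proof
          assume "u^2 - t*u - a^2 \<ge> 0"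
          then have "(u - (t/2 - s)) * (u - (t/2 + s)) \<ge> 0" using prod by simp
          moreover have "u - (t/2 + s) < 0" using b tneg u by linarith
          ultimately show "u \<le> t/2 - s" by (simp add: zero_le_mult_iff)
        next
          assume "u \<le> t/2 - s"
          moreover have "u - (t/2 + s) < 0" using b tneg u by linarith
          ultimately have "(u - (t/2 - s)) * (u - (t/2 + s)) \<ge> 0" by (simp add: zero_le_mult_iff)
          then show "u^2 - t*u - a^2 \<ge> 0" using prod by simp
        qed
        finally show ?thesis using k by simp
      qed
    qed
  qed
qed

lemma sample_prob: "prob_space (sample_law n \<theta>)"
  unfolding sample_law_def by (auto intro!: prob_space_PiM prob_space_normal_density)

lemma comp_distr:
  assumes "i < n"
  shows "distr (sample_law n \<theta>) borel (\<lambda>y. y i) = density lborel (normal_density \<theta> 1)"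
proof -
  have "distr (sample_law n \<theta>) borel (\<lambda>y. y i) = distr (sample_law n \<theta>) (density lborel (normal_density \<theta> 1)) (\<lambda>y. y i)"
    by (rule distr_cong) auto
  also have "\<dots> = density lborel (normal_density \<theta> 1)"
    unfolding sample_law_def using assms
    by (intro distr_PiM_component prob_space_normal_density) auto
  finally show ?thesis .
qed

lemma law_sum:
  assumes "n \<ge> 1"
  shows "distributed (sample_law n \<theta>) lborel (\<lambda>y. \<Sum>i<n. y i) (normal_density (real n*\<theta>) (sqrt (real n)))"
proof -
  let ?N = "density lborel (normal_density \<theta> 1)"
  let ?P = "sample_law n \<theta>"
  interpret P: prob_space ?P by (rule sample_prob)
  have comp: "distributed ?P lborel (\<lambda>y. y i) (normal_density \<theta> 1)" if "i < n" for i
  proof -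
    have "distr ?P lborel (\<lambda>y. y i) = distr ?P borel (\<lambda>y. y i)"
      by (rule distr_cong) auto
    then show ?thesis using comp_distr[OF that, of \<theta>]
      unfolding distributed_def sample_law_def using that by auto
  qed
  have indep: "P.indep_vars (\<lambda>_. borel) (\<lambda>i y. y i) {..<n}"
  proof (subst P.indep_vars_iff_distr_eq_PiM')
    have "0 \<in> {..<n}" using assms by simp
    then show "{..<n} \<noteq> {}" by blast
    show "P.random_variable borel (\<lambda>y. y i)" if "i \<in> {..<n}" for i
    proof -
      have "(\<lambda>y. y i) \<in> measurable (sample_law n \<theta>) (density lborel (normal_density \<theta> 1))"
        using that unfolding sample_law_def by (intro measurable_component_singleton) auto
      moreover have "measurable (sample_law n \<theta>) (density lborel (normal_density \<theta> 1)) = measurable (sample_law n \<theta>) borel"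
        by (rule measurable_cong_sets) auto
      ultimately show ?thesis by simp
    qed
    have "(\<Pi>\<^sub>M i\<in>{..<n}. distr ?P borel (\<lambda>y. y i)) = (\<Pi>\<^sub>M i\<in>{..<n}. ?N)"
      by (intro PiM_cong comp_distr) auto
    also have "\<dots> = ?P" by (simp add: sample_law_def)
    also have "?P = distr ?P ?P (\<lambda>x. x)" by simp
    also have "\<dots> = distr ?P (\<Pi>\<^sub>M i\<in>{..<n}. borel) (\<lambda>x. \<lambda>i\<in>{..<n}. x i)"
      by (rule distr_cong) (auto simp: sample_law_def space_PiM intro!: sets_PiM_cong)
    finally show "distr ?P (\<Pi>\<^sub>M i\<in>{..<n}. borel) (\<lambda>x. \<lambda>i\<in>{..<n}. x i) = (\<Pi>\<^sub>M i\<in>{..<n}. distr ?P borel (\<lambda>y. y i))"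
      by simp
  qed
  have "distributed ?P lborel (\<lambda>x. \<Sum>i<n. x i) (normal_density (\<Sum>i<n. \<theta>) (sqrt (\<Sum>i<n. 1\<^sup>2)))"
  proof (intro P.sum_indep_normal indep comp)
    have "0 \<in> {..<n}" using assms by simp
    then show "{..<n} \<noteq> {}" by blast
  qed auto
  then show ?thesis by simp
qed

lemma law_Z:
  assumes "n \<ge> 1"
  shows "distributed (sample_law n \<theta>) lborel (\<lambda>y. sqrt (real n) * (ybar n y - \<theta>)) std_normal_density"
proof -
  interpret P: prob_space "sample_law n \<theta>" by (rule sample_prob)
  have pos: "0 < sqrt (real n)" using assms by simp
  have "distributed (sample_law n \<theta>) lborel (\<lambda>y. ((\<Sum>i<n. y i) - real n*\<theta>) / sqrt (real n)) std_normal_density"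
    using law_sum[OF assms, of \<theta>] P.normal_standard_normal_convert[OF pos, of "\<lambda>y. \<Sum>i<n. y i" "real n * \<theta>"] by simp
  moreover have "((\<Sum>i<n. y i) - real n*\<theta>) / sqrt (real n) = sqrt (real n) * (ybar n y - \<theta>)" for y
  proof -
    have e: "real n = sqrt (real n) * sqrt (real n)" by simp
    show ?thesis using pos unfolding ybar_def by (subst (1 3) e) (simp add: field_simps)
  qed
  ultimately show ?thesis by simp
qed


abbreviation Std :: "real measure" where "Std \<equiv> density lborel std_normal_density"

lemma Std_prob: "prob_space Std" using prob_space_normal_density[of 1 0] by simp

lemma Std_rd: "real_distribution Std"
  unfolding real_distribution_def real_distribution_axioms_def using Std_prob by simp

lemma std_pos: "std_normal_density x > 0" using normal_density_pos[of 1 0 x] by simp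

lemma Phi_eq: "Phi x = measure Std {..x}" by (simp add: Phi_def cdf_def)

lemma Std_null_iff: "A \<in> sets borel \<Longrightarrow> A \<in> null_sets Std \<longleftrightarrow> A \<in> null_sets lborel"
proof -
  assume A: "A \<in> sets borel"
  have "A \<in> null_sets Std \<longleftrightarrow> (AE x in lborel. x \<in> A \<longrightarrow> std_normal_density x = 0)"
    using A by (subst null_sets_density_iff) auto
  also have "\<dots> \<longleftrightarrow> (AE x in lborel. x \<notin> A)"
    using std_pos by (intro AE_cong) (metis less_irrefl)
  also have "\<dots> \<longleftrightarrow> A \<in> null_sets lborel"
    using A by (subst AE_iff_measurable[of A]) (auto simp: null_sets_def)
  finally show ?thesis .
qed

lemma Phi_cont: "isCont Phi x"
proof -
  have "{x} \<in> null_sets Std" using Std_null_iff[of "{x}"] by (auto simp: null_sets_def)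
  then have "measure Std {x} = 0" by (simp add: measure_def null_sets_def)
  then show ?thesis unfolding Phi_def by (simp add: real_distribution.finite_borel_measure_M[OF Std_rd] finite_borel_measure.isCont_cdf)
qed

lemma Phi_strict: assumes "a < b" shows "Phi a < Phi b"
proof (rule ccontr)
  interpret S: prob_space Std by (rule Std_prob)
  assume "\<not> Phi a < Phi b"
  have u: "{..b} = {..a} \<union> {a<..b}" using assms by auto
  have "measure Std ({..a} \<union> {a<..b}) = measure Std {..a} + measure Std {a<..b}"
    by (subst S.finite_measure_Union) auto
  then have "measure Std {..b} = measure Std {..a} + measure Std {a<..b}" using u by simp
  then have "measure Std {a<..b} = 0" using \<open>\<not> Phi a < Phi b\<close>
    unfolding Phi_eq using measure_nonneg[of Std "{a<..b}"] by linarith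
  then have "emeasure Std {a<..b} = 0" by (simp add: S.emeasure_eq_measure)
  then have "{a<..b} \<in> null_sets Std" by (auto simp: null_sets_def)
  then have "{a<..b} \<in> null_sets lborel" using Std_null_iff[of "{a<..b}"] by simp
  then show False using assms by (simp add: null_sets_def)
qed

lemma Phi_mono: "a \<le> b \<Longrightarrow> Phi a \<le> Phi b"
  using Phi_strict[of a b] by (cases "a = b") auto

lemma alasso_scale: "c > 0 \<Longrightarrow> alasso (c*\<mu>) (c*y) = c * alasso \<mu> y"
  by (cases "y = 0") (auto simp: alasso_def abs_mult power_mult_distrib field_simps power2_eq_square)

lemma Std_measure_le:
  assumes "distributed P lborel Z std_normal_density"
  shows "measure P {y\<in>space P. Z y \<le> c} = Phi c"
proof -
  have Z: "Z \<in> measurable P lborel" and d: "distr P lborel Z = Std"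
    using assms by (auto simp: distributed_def)
  have "Phi c = measure (distr P lborel Z) {..c}" unfolding Phi_eq d ..
  also have "\<dots> = measure P (Z -` {..c} \<inter> space P)" using Z by (simp add: measure_distr)
  also have "Z -` {..c} \<inter> space P = {y\<in>space P. Z y \<le> c}" by auto
  finally show ?thesis by simp
qed

lemma F_A_eq:
  assumes n: "n \<ge> 1" and mu: "\<mu> \<ge> 0"
  shows "F_A n \<mu> \<theta> x = Phi (kk (sqrt (real n) * \<mu>) (x + sqrt (real n) * \<theta>) - sqrt (real n) * \<theta>)"
proof -
  let ?P = "sample_law n \<theta>"
  let ?c = "sqrt (real n)"
  let ?Z = "\<lambda>y. sqrt (real n) * (ybar n y - \<theta>)"
  define f where "f = (\<lambda>y. sqrt (real n) * (alasso \<mu> (ybar n y) - \<theta>))"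
  have cpos: "?c > 0" using n by simp
  have fm: "f \<in> borel_measurable ?P"
    unfolding f_def alasso_def ybar_def sample_law_def by measurable
  have feq: "f y = alasso (?c*\<mu>) (?Z y + ?c*\<theta>) - ?c*\<theta>" for y
  proof -
    have "?Z y + ?c*\<theta> = ?c * ybar n y" by (simp add: algebra_simps)
    then show ?thesis unfolding f_def using alasso_scale[OF cpos, of \<mu> "ybar n y"]
      by (simp add: algebra_simps)
  qed
  have a: "?c * \<mu> \<ge> 0" using mu by simp
  have "F_A n \<mu> \<theta> x = measure (distr ?P borel f) {..x}" by (simp add: F_A_def f_def cdf_def)
  also have "\<dots> = measure ?P (f -` {..x} \<inter> space ?P)" using fm by (simp add: measure_distr)
  also have "f -` {..x} \<inter> space ?P = {y\<in>space ?P. ?Z y \<le> kk (?c*\<mu>) (x + ?c*\<theta>) - ?c*\<theta>}"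
    using alasso_le_iff[OF a] by (auto simp: feq algebra_simps)
  also have "measure ?P \<dots> = Phi (kk (?c*\<mu>) (x + ?c*\<theta>) - ?c*\<theta>)"
    by (rule Std_measure_le[OF law_Z[OF n]])
  finally show ?thesis .
qed

lemma G_lim_eq: "G_lim m r x = Phi (kk m (x + r) - r)"
proof (cases "0 \<le> x + r")
  case True
  then show ?thesis unfolding G_lim_def kk_def
    by (simp add: add.commute) (rule arg_cong[where f=Phi], simp add: field_simps)
next
  case False
  then show ?thesis unfolding G_lim_def kk_def
    by (simp add: add.commute) (rule arg_cong[where f=Phi], simp add: field_simps)
qed

lemma G_lim_dist: "m \<ge> 0 \<Longrightarrow> \<exists>M. real_distribution M \<and> cdf M = G_lim m r"
proof -
  assume m: "m \<ge> 0"
  interpret S: prob_space Std by (rule Std_prob)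
  let ?g = "\<lambda>z. alasso m (z + r) - r"
  have gm: "?g \<in> borel_measurable Std" unfolding alasso_def by measurable
  have "cdf (distr Std borel ?g) x = G_lim m r x" for x
  proof -
    have "cdf (distr Std borel ?g) x = measure Std (?g -` {..x} \<inter> space Std)"
      using gm by (simp add: cdf_def measure_distr)
    also have "?g -` {..x} \<inter> space Std = {z\<in>space Std. (\<lambda>z. z) z \<le> kk m (x + r) - r}"
      using alasso_le_iff[OF m] by (auto simp: algebra_simps)
    also have "measure Std \<dots> = Phi (kk m (x + r) - r)"
      by (rule Std_measure_le) (simp add: distributed_def distr_id2)
    finally show ?thesis by (simp add: G_lim_eq)
  qed
  moreover have "real_distribution (distr Std borel ?g)" using gm by simp
  ultimately show ?thesis by blast
qed


lemma kk_bound: "\<bar>kk a t\<bar> \<le> \<bar>t\<bar> + \<bar>a\<bar>"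
proof -
  have "sqrt ((t/2)^2 + a^2) \<le> sqrt ((t/2)^2) + sqrt (a^2)"
    by (rule sqrt_add_le_add_sqrt) auto
  then have s: "sqrt ((t/2)^2 + a^2) \<le> \<bar>t\<bar>/2 + \<bar>a\<bar>" by simp
  have s0: "sqrt ((t/2)^2 + a^2) \<ge> 0" by simp
  show ?thesis
  proof (cases "t \<ge> 0")
    case True
    then have "kk a t = t/2 + sqrt ((t/2)^2 + a^2)" by (simp add: kk_def)
    then show ?thesis using s s0 True by (simp add: abs_le_iff; linarith)
  next
    case False
    then have "kk a t = t/2 - sqrt ((t/2)^2 + a^2)" by (simp add: kk_def)
    then show ?thesis using s s0 False by (simp add: abs_le_iff; linarith)
  qed
qed

lemma aux_div: "(p::real) \<ge> 0 \<Longrightarrow> q \<ge> T \<Longrightarrow> T > 0 \<Longrightarrow> p * q = A \<Longrightarrow> p \<le> A / T"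
proof -
  assume h: "p \<ge> 0" "q \<ge> T" "T > 0" "p * q = A"
  have "p * T \<le> p * q" using mult_left_mono[OF h(2) h(1)] by simp
  then have "p * T \<le> A" using h(4) by simp
  then show ?thesis using h(3) by (simp add: pos_le_divide_eq)
qed

lemma kk_minus_t: assumes "t \<noteq> 0" shows "\<bar>kk a t - t\<bar> \<le> a^2 / \<bar>t\<bar>"
proof -
  define s where "s = sqrt((t/2)^2 + a^2)"
  have s2: "s^2 = (t/2)^2 + a^2" unfolding s_def by (simp add: add_nonneg_nonneg)
  have st: "s \<ge> \<bar>t/2\<bar>" unfolding s_def by (rule real_le_rsqrt) (simp add: power_divide)
  have pq: "(s - t/2) * (s + t/2) = a^2" using s2 by (simp add: algebra_simps power2_eq_square)
  show ?thesis
  proof (cases "t \<ge> 0")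
    case True
    then have tp: "t > 0" using assms by simp
    have "kk a t - t = s - t/2" using True by (simp add: kk_def s_def)
    moreover have "s - t/2 \<le> a^2 / \<bar>t\<bar>"
      by (rule aux_div[where q="s + t/2"]) (use st tp pq in auto)
    moreover have "s - t/2 \<ge> 0" using st by simp
    ultimately show ?thesis by simp
  next
    case False
    have "kk a t - t = -(s + t/2)" using False by (simp add: kk_def s_def)
    moreover have "s + t/2 \<le> a^2 / \<bar>t\<bar>"
      by (rule aux_div[where q="s - t/2"]) (use st False pq in \<open>auto simp: mult.commute\<close>)
    moreover have "s + t/2 \<ge> 0" using st by simp
    ultimately show ?thesis by simp
  qed
qed

lemma kk_neg: "a \<ge> 0 \<Longrightarrow> t < 0 \<Longrightarrow> kk a t \<le> -a"
proof -
  assume a: "a \<ge> 0" and t: "t < 0"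
  have s: "sqrt ((t/2)^2 + a^2) \<ge> a" by (rule real_le_rsqrt) simp
  have "kk a t = t/2 - sqrt ((t/2)^2 + a^2)" using t by (simp add: kk_def)
  then show ?thesis using s t by linarith
qed

lemma kk_zero: "a \<ge> 0 \<Longrightarrow> kk a 0 = a"
  by (simp add: kk_def)


theorem theorem2:
  fixes \<mu> \<theta> :: "nat \<Rightarrow> real" and m :: real and \<nu> :: ereal
  assumes mu_pos: "\<And>n. \<mu> n > 0"
    and mu_lim: "\<mu> \<longlonglongrightarrow> 0"
    and m_nonneg: "0 \<le> m"
    and rootn_mu: "(\<lambda>n. sqrt (real n) * \<mu> n) \<longlonglongrightarrow> m"
    and rootn_theta: "(\<lambda>n. ereal (sqrt (real n) * \<theta> n)) \<longlonglongrightarrow> \<nu>"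
  shows "(\<nu> \<noteq> \<infinity> \<and> \<nu> \<noteq> -\<infinity> \<longrightarrow>
            weak_conv (\<lambda>n. F_A n (\<mu> n) (\<theta> n)) (G_lim m (real_of_ereal \<nu>))
            \<and> (\<exists>M. real_distribution M \<and> cdf M = G_lim m (real_of_ereal \<nu>)))
       \<and> (\<bar>\<nu>\<bar> = \<infinity> \<longrightarrow>
            weak_conv (\<lambda>n. F_A n (\<mu> n) (\<theta> n)) Phi)"
proof -
  define a where "a = (\<lambda>n. sqrt (real n) * \<mu> n)"
  define b where "b = (\<lambda>n. sqrt (real n) * \<theta> n)"
  have a_lim: "a \<longlonglongrightarrow> m" using rootn_mu unfolding a_def .
  have Feq: "eventually (\<lambda>n. F_A n (\<mu> n) (\<theta> n) x = Phi (kk (a n) (x + b n) - b n)) sequentially" for x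
    using eventually_ge_at_top[of 1]
    by eventually_elim (simp add: F_A_eq a_def b_def less_imp_le[OF mu_pos])
  have conv: "(\<lambda>n. F_A n (\<mu> n) (\<theta> n) x) \<longlonglongrightarrow> Phi L"
    if h: "(\<lambda>n. kk (a n) (x + b n) - b n) \<longlonglongrightarrow> L" for x L
  proof -
    have "(\<lambda>n. Phi (kk (a n) (x + b n) - b n)) \<longlonglongrightarrow> Phi L"
      using isCont_tendsto_compose[OF Phi_cont h] .
    then show ?thesis by (subst tendsto_cong[OF Feq])
  qed
  have part1: "\<nu> \<noteq> \<infinity> \<and> \<nu> \<noteq> -\<infinity> \<longrightarrow>
            weak_conv (\<lambda>n. F_A n (\<mu> n) (\<theta> n)) (G_lim m (real_of_ereal \<nu>))
            \<and> (\<exists>M. real_distribution M \<and> cdf M = G_lim m (real_of_ereal \<nu>))"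
  proof
    assume fin: "\<nu> \<noteq> \<infinity> \<and> \<nu> \<noteq> -\<infinity>"
    obtain r where r: "\<nu> = ereal r" using fin by (cases \<nu>) auto
    have b_lim: "b \<longlonglongrightarrow> r" using rootn_theta unfolding r b_def by simp
    have tb: "(\<lambda>n. x + b n) \<longlonglongrightarrow> x + r" for x by (intro tendsto_intros b_lim)
    have wc: "weak_conv (\<lambda>n. F_A n (\<mu> n) (\<theta> n)) (G_lim m r)"
      unfolding weak_conv_def
    proof (intro allI impI)
      fix x assume cont: "isCont (G_lim m r) x"
      show "(\<lambda>n. F_A n (\<mu> n) (\<theta> n) x) \<longlonglongrightarrow> G_lim m r x"
        unfolding G_lim_eq
      proof (rule conv)
        show "(\<lambda>n. kk (a n) (x + b n) - b n) \<longlonglongrightarrow> kk m (x + r) - r"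
        proof (cases "x + r > 0")
          case True
          have ev: "eventually (\<lambda>n. x + b n > 0) sequentially"
            using order_tendstoD(1)[OF tb True] .
          have lim: "(\<lambda>n. (x + b n)/2 + sqrt (((x + b n)/2)^2 + (a n)^2) - b n) \<longlonglongrightarrow>
                (x + r)/2 + sqrt (((x + r)/2)^2 + m^2) - r"
            by (intro tendsto_intros b_lim a_lim) simp_all
          have kq: "kk m (x + r) - r = (x + r)/2 + sqrt (((x + r)/2)^2 + m^2) - r"
            using True by (simp add: kk_def)
          have ev2: "eventually (\<lambda>n. kk (a n) (x + b n) - b n =
              (x + b n)/2 + sqrt (((x + b n)/2)^2 + (a n)^2) - b n) sequentially"
            using ev by eventually_elim (simp add: kk_def)
          show ?thesis unfolding kq by (subst tendsto_cong[OF ev2]) (rule lim)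
        next
          case False
          show ?thesis
          proof (cases "x + r < 0")
            case True
            have ev: "eventually (\<lambda>n. x + b n < 0) sequentially"
              using order_tendstoD(2)[OF tb True] .
            have lim: "(\<lambda>n. (x + b n)/2 - sqrt (((x + b n)/2)^2 + (a n)^2) - b n) \<longlonglongrightarrow>
                  (x + r)/2 - sqrt (((x + r)/2)^2 + m^2) - r"
              by (intro tendsto_intros b_lim a_lim) simp_all
            have kq: "kk m (x + r) - r = (x + r)/2 - sqrt (((x + r)/2)^2 + m^2) - r"
              using True by (simp add: kk_def)
            have ev2: "eventually (\<lambda>n. kk (a n) (x + b n) - b n =
                (x + b n)/2 - sqrt (((x + b n)/2)^2 + (a n)^2) - b n) sequentially"
              using ev by eventually_elim (simp add: kk_def)
            show ?thesis unfolding kq by (subst tendsto_cong[OF ev2]) (rule lim)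
          next
            case False
            then have x0: "x + r = 0" using \<open>\<not> x + r > 0\<close> by linarith
            show ?thesis
            proof (cases "m = 0")
              case True
              have g: "(\<lambda>n. \<bar>x + b n\<bar> + \<bar>a n\<bar>) \<longlonglongrightarrow> \<bar>x + r\<bar> + \<bar>m\<bar>"
                by (intro tendsto_intros tb a_lim)
              have "(\<lambda>n. kk (a n) (x + b n)) \<longlonglongrightarrow> 0"
                by (rule Lim_null_comparison[OF _ g[unfolded x0 True, simplified]])
                   (simp add: kk_bound)
              then have "(\<lambda>n. kk (a n) (x + b n) - b n) \<longlonglongrightarrow> 0 - r"
                by (intro tendsto_intros b_lim)
              moreover have "kk m (x + r) = 0" using x0 True by (simp add: kk_def)
              ultimately show ?thesis by simp
            next
              case False
              then have mpos: "m > 0" using m_nonneg by simp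
              define xs where "xs = (\<lambda>n. x - inverse (real (Suc n)))"
              have xs_lim: "xs \<longlonglongrightarrow> x"
                unfolding xs_def using tendsto_diff[OF tendsto_const LIMSEQ_inverse_real_of_nat, of x] by simp
              have "(\<lambda>n. G_lim m r (xs n)) \<longlonglongrightarrow> G_lim m r x"
                using isCont_tendsto_compose[OF cont xs_lim] .
              moreover have "G_lim m r (xs n) \<le> Phi (-m - r)" for n
              proof -
                have "inverse (real (Suc n)) > 0" by simp
                then have "xs n + r < 0" using x0 unfolding xs_def by linarith
                then have "kk m (xs n + r) - r \<le> -m - r" using kk_neg[OF m_nonneg] by fastforce
                then show ?thesis unfolding G_lim_eq by (rule Phi_mono)
              qed
              ultimately have "G_lim m r x \<le> Phi (-m - r)"
                by (intro LIMSEQ_le_const2) auto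
              moreover have "G_lim m r x = Phi (m - r)"
                unfolding G_lim_eq x0 using kk_zero[OF m_nonneg] by simp
              moreover have "Phi (-m - r) < Phi (m - r)" using mpos by (intro Phi_strict) simp
              ultimately show ?thesis by simp
            qed
          qed
        qed
      qed
    qed
    show "weak_conv (\<lambda>n. F_A n (\<mu> n) (\<theta> n)) (G_lim m (real_of_ereal \<nu>))
            \<and> (\<exists>M. real_distribution M \<and> cdf M = G_lim m (real_of_ereal \<nu>))"
      using wc G_lim_dist[OF m_nonneg, of r] r by simp
  qed
  have part2: "\<bar>\<nu>\<bar> = \<infinity> \<longrightarrow> weak_conv (\<lambda>n. F_A n (\<mu> n) (\<theta> n)) Phi"
  proof
    assume inf: "\<bar>\<nu>\<bar> = \<infinity>"
    show "weak_conv (\<lambda>n. F_A n (\<mu> n) (\<theta> n)) Phi"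
      unfolding weak_conv_def
    proof (intro allI impI)
      fix x
      have tinf: "filterlim (\<lambda>n. \<bar>x + b n\<bar>) at_top sequentially"
        unfolding filterlim_at_top
      proof
        fix Z :: real
        show "eventually (\<lambda>n. Z \<le> \<bar>x + b n\<bar>) sequentially"
        proof (cases "\<nu> = \<infinity>")
          case True
          have l: "(\<lambda>n. ereal (b n)) \<longlonglongrightarrow> \<infinity>" using rootn_theta True by (simp add: b_def)
          then have "eventually (\<lambda>n. ereal (Z + \<bar>x\<bar>) < ereal (b n)) sequentially"
            unfolding tendsto_PInfty by blast
          then show ?thesis by eventually_elim auto
        next
          case False
          then have "\<nu> = -\<infinity>" using inf by (cases \<nu>) auto
          then have l: "(\<lambda>n. ereal (b n)) \<longlonglongrightarrow> -\<infinity>" using rootn_theta by (simp add: b_def)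
          then have "eventually (\<lambda>n. ereal (b n) < ereal (-(Z + \<bar>x\<bar>))) sequentially"
            unfolding tendsto_MInfty by blast
          then show ?thesis by eventually_elim auto
        qed
      qed
      have q: "(\<lambda>n. (a n)^2 / \<bar>x + b n\<bar>) \<longlonglongrightarrow> 0"
        by (rule tendsto_divide_0[OF tendsto_power[OF a_lim] filterlim_at_top_imp_at_infinity[OF tinf]])
      have ev: "eventually (\<lambda>n. 1 \<le> \<bar>x + b n\<bar>) sequentially"
        using tinf unfolding filterlim_at_top by blast
      have "(\<lambda>n. kk (a n) (x + b n) - (x + b n)) \<longlonglongrightarrow> 0"
      proof (rule Lim_null_comparison[OF _ q])
        show "eventually (\<lambda>n. norm (kk (a n) (x + b n) - (x + b n)) \<le> (a n)^2 / \<bar>x + b n\<bar>) sequentially"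
          using ev by eventually_elim (auto intro!: kk_minus_t)
      qed
      then have "(\<lambda>n. (kk (a n) (x + b n) - (x + b n)) + x) \<longlonglongrightarrow> 0 + x"
        by (intro tendsto_intros)
      then have "(\<lambda>n. kk (a n) (x + b n) - b n) \<longlonglongrightarrow> x" by (simp add: algebra_simps)
      then show "(\<lambda>n. F_A n (\<mu> n) (\<theta> n) x) \<longlonglongrightarrow> Phi x" by (rule conv)
    qed
  qed
  show ?thesis using part1 part2 by blast
qed

end
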